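(* Let $k\ge 2$, $\ell\ge1$, $m\ge1$ be integers with $m\cdot2^{-k\ell}<\frac12$, and let $\mathcal X=\{\Phi_i:0\le i<2^m\}$ be the set of hard CNF formulas described in the context. For all $0\le i,j<2^m$, $$d_{\mathrm{TV}}(\mu_i,\mu_j)\ge d_b(i,j)\cdot2^{-k\ell-2}.$$
   Context: Gadgets: on variables $U=\{v_{i,j}:i\in[\ell],j\in[k]\}$, for each $i\in\{1,\dots,\ell-1\}$, $j\in[k]$, let $c_{ij}$ be the clause on $\{v_{i,r}:r\ne j\}\cup\{v_{i+1,j}\}$ forbidding the all-True assignment if $i$ is odd and the all-False assignment if $i$ is even; let $\mathcal C$ be the set of these clauses and $c$ the clause on $\{v_{1,j}:j\in[k]\}$ forbidding all-True. The unrestricted depth-$\ell$ gadget is $(U,\mathcal C)$, the restricted one is $(U,\mathcal C\cup\{c\})$. Hard formulas: let $V$ have $mk\ell$ variables partitioned into $U_1,\dots,U_m$ each of size $k\ell$. For $0\le i<2^m$, write $i$ in binary with $m$ bits $i_1,\dots,i_m$; $\Phi_i=(V,\mathcal C_i)$ places on each $U_j$ the unrestricted depth-$\ell$ gadget if $i_j=0$ and the restricted depth-$\ell$ gadget if $i_j=1$. $\mu_i$ is the uniform distribution over satisfying assignments of $\Phi_i$, $d_{\mathrm{TV}}$ is total variation distance, and $d_b(i,j)$ is the number of positions where the $m$-bit binary representations of $i$ and $j$ differ. *)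

theory Defs
  imports "HOL-Probability.Probability"
begin

text \<open>Variables: triples (u, i, j) meaning v_{i,j} of block U_u, with
  u \<in> {1..m}, i \<in> {1..l}, j \<in> {1..k}.
  A clause is a pair (S, b): the set S of its variables and the forbidden
  constant value b (it forbids the assignment giving every variable in S the value b).\<close>

type_synonym var = "nat \<times> nat \<times> nat"
type_synonym clause = "var set \<times> bool"

definition vars :: "nat \<Rightarrow> nat \<Rightarrow> nat \<Rightarrow> var set" where
  "vars k l m = {1..m} \<times> {1..l} \<times> {1..k}"

definition assignments :: "var set \<Rightarrow> (var \<Rightarrow> bool) set" where
  "assignments V = {\<sigma>. \<forall>x. x \<notin> V \<longrightarrow> \<sigma> x = False}"

definition clause_sat :: "(var \<Rightarrow> bool) \<Rightarrow> clause \<Rightarrow> bool" where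
  "clause_sat \<sigma> c = (\<not> (\<forall>x\<in>fst c. \<sigma> x = snd c))"

definition satisfying :: "var set \<Rightarrow> clause set \<Rightarrow> (var \<Rightarrow> bool) set" where
  "satisfying V C = {\<sigma> \<in> assignments V. \<forall>c\<in>C. clause_sat \<sigma> c}"

definition gadget_clauses :: "nat \<Rightarrow> nat \<Rightarrow> nat \<Rightarrow> clause set" where
  "gadget_clauses k l u =
     {(({(u, i, r) | r. r \<in> {1..k} \<and> r \<noteq> j} \<union> {(u, Suc i, j)}), odd i) | i j.
        i \<in> {1..l - 1} \<and> j \<in> {1..k}}"

definition restr_clause :: "nat \<Rightarrow> nat \<Rightarrow> clause" where
  "restr_clause k u = ({(u, 1, j) | j. j \<in> {1..k}}, True)"

text \<open>j-th bit (j = 1..m, most significant first) of the m-bit binary representation of i.\<close>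
definition bbit :: "nat \<Rightarrow> nat \<Rightarrow> nat \<Rightarrow> nat" where
  "bbit m i j = (i div 2 ^ (m - j)) mod 2"

definition hard_clauses :: "nat \<Rightarrow> nat \<Rightarrow> nat \<Rightarrow> nat \<Rightarrow> clause set" where
  "hard_clauses k l m i =
     (\<Union>u\<in>{1..m}. gadget_clauses k l u \<union> (if bbit m i u = 1 then {restr_clause k u} else {}))"

definition mu :: "nat \<Rightarrow> nat \<Rightarrow> nat \<Rightarrow> nat \<Rightarrow> (var \<Rightarrow> bool) pmf" where
  "mu k l m i = pmf_of_set (satisfying (vars k l m) (hard_clauses k l m i))"

definition d_TV :: "'a pmf \<Rightarrow> 'a pmf \<Rightarrow> real" where
  "d_TV p q = (\<Sum>x\<in>set_pmf p \<union> set_pmf q. \<bar>pmf p x - pmf q x\<bar>) / 2"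

definition d_b :: "nat \<Rightarrow> nat \<Rightarrow> nat \<Rightarrow> nat" where
  "d_b m i j = card {p \<in> {1..m}. bbit m i p \<noteq> bbit m j p}"

end

theory Submission
  imports Defs
begin

definition blk :: "nat \<Rightarrow> nat \<Rightarrow> nat \<Rightarrow> var set" where
  "blk k l u = {u} \<times> {1..l} \<times> {1..k}"
definition Rw :: "nat \<Rightarrow> nat \<Rightarrow> (var \<Rightarrow> bool) set" where
  "Rw k u = {\<sigma>. \<forall>r\<in>{1..k}. \<sigma> (u,1,r)}"
definition Sat :: "nat \<Rightarrow> nat \<Rightarrow> nat \<Rightarrow> nat \<Rightarrow> (var \<Rightarrow> bool) set" where
  "Sat k l m i = satisfying (vars k l m) (hard_clauses k l m i)"
definition tau :: "nat \<Rightarrow> nat \<Rightarrow> nat \<Rightarrow> var \<Rightarrow> bool" where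
  "tau k l u x = (x \<in> blk k l u \<and> odd (fst (snd x)))"
definition rep :: "nat \<Rightarrow> nat \<Rightarrow> nat \<Rightarrow> (var \<Rightarrow> bool) \<Rightarrow> var \<Rightarrow> bool" where
  "rep k l u \<sigma> = (\<lambda>x. if x \<in> blk k l u then tau k l u x else \<sigma> x)"

lemma assignments_img: "assignments V = (\<lambda>S x. x \<in> S) ` Pow V"
proof
  show "assignments V \<subseteq> (\<lambda>S x. x \<in> S) ` Pow V"
  proof
    fix \<sigma> assume "\<sigma> \<in> assignments V"
    hence "{x. \<sigma> x} \<in> Pow V" "\<sigma> = (\<lambda>x. x \<in> {x. \<sigma> x})" unfolding assignments_def by auto
    thus "\<sigma> \<in> (\<lambda>S x. x \<in> S) ` Pow V" by blast
  qed
  show "(\<lambda>S x. x \<in> S) ` Pow V \<subseteq> assignments V" unfolding assignments_def by auto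
qed

lemma card_assignments:
  assumes "finite V"
  shows "finite (assignments V)" "card (assignments V) = 2 ^ card V"
proof -
  have inj: "inj_on (\<lambda>S x. x \<in> S) (Pow V)"
    unfolding inj_on_def by (metis Collect_mem_eq)
  show "finite (assignments V)" using assms by (simp add: assignments_img)
  show "card (assignments V) = 2 ^ card V"
    using card_image[OF inj] card_Pow[of V] assms by (simp add: assignments_img)
qed

lemma finite_vars: "finite (vars k l m)" unfolding vars_def by auto

lemma finite_Sat: "finite (Sat k l m i)"
proof -
  have "Sat k l m i \<subseteq> assignments (vars k l m)"
    unfolding Sat_def satisfying_def by auto
  thus ?thesis using card_assignments(1)[OF finite_vars] finite_subset by blast
qed

lemma blk_sub: "u \<in> {1..m} \<Longrightarrow> blk k l u \<subseteq> vars k l m"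
  unfolding blk_def vars_def by auto

lemma finite_blk: "finite (blk k l u)" unfolding blk_def by auto

lemma card_blk: "card (blk k l u) = l * k"
  unfolding blk_def by (simp add: card_cartesian_product)

lemma hard_clauses_cases:
  assumes "c \<in> hard_clauses k l m i"
  obtains w where "w \<in> {1..m}" "c \<in> gadget_clauses k l w"
    | w where "w \<in> {1..m}" "bbit m i w = 1" "c = restr_clause k w"
  using assms unfolding hard_clauses_def by (auto split: if_splits)

lemma gadget_vars: "c \<in> gadget_clauses k l w \<Longrightarrow> x \<in> fst c \<Longrightarrow> fst x = w"
  unfolding gadget_clauses_def by auto

lemma restr_vars: "x \<in> fst (restr_clause k w) \<Longrightarrow> fst x = w"
  unfolding restr_clause_def by auto

lemma clause_sat_agree:
  "(\<And>x. x \<in> fst c \<Longrightarrow> \<sigma> x = \<sigma>' x) \<Longrightarrow> clause_sat \<sigma> c = clause_sat \<sigma>' c"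
  unfolding clause_sat_def by auto

lemma Sat_nonempty:
  assumes "k \<ge> 2"
  shows "Sat k l m i \<noteq> {}"
proof -
  define \<rho> where "\<rho> = (\<lambda>x::var. x \<in> vars k l m \<and> even (fst (snd x)))"
  have "\<rho> \<in> Sat k l m i"
    unfolding Sat_def satisfying_def
  proof (intro CollectI conjI ballI)
    show "\<rho> \<in> assignments (vars k l m)" unfolding assignments_def \<rho>_def by auto
    fix c assume "c \<in> hard_clauses k l m i"
    then show "clause_sat \<rho> c"
    proof (cases rule: hard_clauses_cases)
      case (1 w)
      then obtain i' j where c: "c = (({(w, i', r) | r. r \<in> {1..k} \<and> r \<noteq> j} \<union> {(w, Suc i', j)}), odd i')"
        and ij: "i' \<in> {1..l-1}" "j \<in> {1..k}"
        unfolding gadget_clauses_def by auto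
      define r where "r = (if j = 1 then 2 else 1::nat)"
      have r: "r \<in> {1..k}" "r \<noteq> j" using assms ij unfolding r_def by auto
      have "(w,i',r) \<in> fst c" using c r by auto
      moreover have "\<rho> (w,i',r) \<noteq> snd c" using c r ij 1(1) unfolding \<rho>_def vars_def by auto
      ultimately show ?thesis unfolding clause_sat_def by blast
    next
      case (2 w)
      have "(w,1,1) \<in> fst c" using 2 assms unfolding restr_clause_def by auto
      moreover have "\<rho> (w,1,1) \<noteq> snd c" using 2 unfolding \<rho>_def restr_clause_def by auto
      ultimately show ?thesis unfolding clause_sat_def by blast
    qed
  qed
  thus ?thesis by auto
qed

lemma rep_Sat:
  assumes "u \<in> {1..m}" "bbit m i u \<noteq> 1" "\<sigma> \<in> Sat k l m i"
  shows "rep k l u \<sigma> \<in> Sat k l m i"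
proof -
  have \<sigma>: "\<sigma> \<in> assignments (vars k l m)" "\<forall>c\<in>hard_clauses k l m i. clause_sat \<sigma> c"
    using assms(3) unfolding Sat_def satisfying_def by auto
  show ?thesis unfolding Sat_def satisfying_def
  proof (intro CollectI conjI ballI)
    show "rep k l u \<sigma> \<in> assignments (vars k l m)"
      using \<sigma>(1) blk_sub[OF assms(1), of k l] unfolding assignments_def rep_def tau_def by auto
    fix c assume c: "c \<in> hard_clauses k l m i"
    show "clause_sat (rep k l u \<sigma>) c"
      using c
    proof (cases rule: hard_clauses_cases)
      case (1 w)
      show ?thesis
      proof (cases "w = u")
        case True
        then obtain i' j where c: "c = (({(u, i', r) | r. r \<in> {1..k} \<and> r \<noteq> j} \<union> {(u, Suc i', j)}), odd i')"
          and ij: "i' \<in> {1..l-1}" "j \<in> {1..k}"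
          using 1 unfolding gadget_clauses_def by auto
        have "(u, Suc i', j) \<in> fst c" using c by auto
        moreover have "rep k l u \<sigma> (u, Suc i', j) \<noteq> snd c"
          using ij c unfolding rep_def tau_def blk_def by auto
        ultimately show ?thesis unfolding clause_sat_def by blast
      next
        case False
        have "clause_sat \<sigma> c" using \<sigma>(2) c by auto
        moreover have "\<And>x. x \<in> fst c \<Longrightarrow> \<sigma> x = rep k l u \<sigma> x"
          using gadget_vars[OF 1(2)] False unfolding rep_def blk_def by auto
        ultimately show ?thesis using clause_sat_agree by metis
      qed
    next
      case (2 w)
      then have "w \<noteq> u" using assms(2) by auto
      have "clause_sat \<sigma> c" using \<sigma>(2) c by auto
      moreover have "\<And>x. x \<in> fst c \<Longrightarrow> \<sigma> x = rep k l u \<sigma> x"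
        using restr_vars 2 \<open>w \<noteq> u\<close> unfolding rep_def blk_def by fastforce
      ultimately show ?thesis using clause_sat_agree by metis
    qed
  qed
qed

lemma rep_R: "l \<ge> 1 \<Longrightarrow> rep k l u \<sigma> \<in> Rw k u"
  unfolding rep_def Rw_def tau_def blk_def by auto

lemma key:
  assumes "u \<in> {1..m}" "bbit m i u \<noteq> 1" "l \<ge> 1" "X \<subseteq> Sat k l m i"
    and closed: "\<And>\<sigma> \<sigma>'. \<sigma> \<in> X \<Longrightarrow> \<sigma>' \<in> Sat k l m i \<Longrightarrow> (\<And>x. x \<notin> blk k l u \<Longrightarrow> \<sigma>' x = \<sigma> x) \<Longrightarrow> \<sigma>' \<in> X"
  shows "card X \<le> card (X \<inter> Rw k u) * 2 ^ (k*l)"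
proof -
  define f where "f = (\<lambda>\<sigma>. (rep k l u \<sigma>, (\<lambda>x. x \<in> blk k l u \<and> \<sigma> x)))"
  have inj: "inj_on f X"
  proof (rule inj_onI)
    fix \<sigma>1 \<sigma>2 assume "\<sigma>1 \<in> X" "\<sigma>2 \<in> X" "f \<sigma>1 = f \<sigma>2"
    hence a: "rep k l u \<sigma>1 = rep k l u \<sigma>2"
      and b: "(\<lambda>x. x \<in> blk k l u \<and> \<sigma>1 x) = (\<lambda>x. x \<in> blk k l u \<and> \<sigma>2 x)"
      unfolding f_def by auto
    show "\<sigma>1 = \<sigma>2"
    proof
      fix x show "\<sigma>1 x = \<sigma>2 x"
      proof (cases "x \<in> blk k l u")
        case True thus ?thesis using fun_cong[OF b, of x] by simp
      next
        case False thus ?thesis using fun_cong[OF a, of x] unfolding rep_def by simp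
      qed
    qed
  qed
  have sub: "f ` X \<subseteq> (X \<inter> Rw k u) \<times> assignments (blk k l u)"
  proof
    fix p assume "p \<in> f ` X"
    then obtain \<sigma> where \<sigma>: "\<sigma> \<in> X" "p = f \<sigma>" by auto
    have "rep k l u \<sigma> \<in> Sat k l m i" using rep_Sat assms \<sigma> by blast
    hence "rep k l u \<sigma> \<in> X" by (rule closed[OF \<sigma>(1)]) (simp add: rep_def)
    moreover have "rep k l u \<sigma> \<in> Rw k u" using rep_R assms(3) .
    moreover have "(\<lambda>x. x \<in> blk k l u \<and> \<sigma> x) \<in> assignments (blk k l u)"
      unfolding assignments_def by auto
    ultimately show "p \<in> (X \<inter> Rw k u) \<times> assignments (blk k l u)" using \<sigma>(2) unfolding f_def by auto
  qed
  have fin: "finite (X \<inter> Rw k u)" using finite_Sat assms(4) finite_subset by blast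
  have fin2: "finite (assignments (blk k l u))" using card_assignments(1)[OF finite_blk] .
  have "card X = card (f ` X)" using card_image[OF inj] by simp
  also have "\<dots> \<le> card ((X \<inter> Rw k u) \<times> assignments (blk k l u))"
    by (rule card_mono) (use fin fin2 sub in auto)
  also have "\<dots> = card (X \<inter> Rw k u) * 2^(k*l)"
    using card_assignments(2)[OF finite_blk, of k l u] card_blk[of k l u]
    by (simp add: card_cartesian_product mult.commute)
  finally show ?thesis .
qed

lemma union_bound:
  assumes "l \<ge> 1" "finite A" "A \<subseteq> {u\<in>{1..m}. bbit m i u \<noteq> 1}"
  shows "real (card (Sat k l m i - (\<Union>u\<in>A. Rw k u)))
           \<le> real (card (Sat k l m i)) * (1 - (1/2)^(k*l))^card A"
  using assms(2,3)
proof (induction A rule: finite_induct)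
  case empty show ?case by simp
next
  case (insert u A)
  define X where "X = Sat k l m i - (\<Union>v\<in>A. Rw k v)"
  have u: "u \<in> {1..m}" "bbit m i u \<noteq> 1" using insert.prems by auto
  have IH: "real (card X) \<le> real (card (Sat k l m i)) * (1 - (1/2)^(k*l))^card A"
    using insert X_def by auto
  have XS: "X \<subseteq> Sat k l m i" unfolding X_def by auto
  have closed: "\<sigma>' \<in> X"
    if a: "\<sigma> \<in> X" "\<sigma>' \<in> Sat k l m i" "\<And>x. x \<notin> blk k l u \<Longrightarrow> \<sigma>' x = \<sigma> x" for \<sigma> \<sigma>'
  proof -
    have "\<sigma>' \<notin> Rw k v" if "v \<in> A" for v
    proof -
      have "v \<noteq> u" using that insert.hyps(2) by auto
      hence "\<And>r. \<sigma>' (v,1,r) = \<sigma> (v,1,r)" using a(3) unfolding blk_def by auto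
      moreover have "\<sigma> \<notin> Rw k v" using a(1) that unfolding X_def by auto
      ultimately show ?thesis unfolding Rw_def by auto
    qed
    thus "\<sigma>' \<in> X" using a(2) unfolding X_def by auto
  qed
  have kk: "card X \<le> card (X \<inter> Rw k u) * 2^(k*l)"
    by (rule key[OF u assms(1) XS closed])
  have finX: "finite X" using XS finite_Sat finite_subset by blast
  have eq: "Sat k l m i - (\<Union>v\<in>insert u A. Rw k v) = X - Rw k u" unfolding X_def by auto
  have c1: "card (X - Rw k u) = card X - card (X \<inter> Rw k u)"
    by (rule card_Diff_subset_Int) (use finX in auto)
  have c2: "card (X \<inter> Rw k u) \<le> card X" using finX by (simp add: card_mono)
  have r1: "real (card (X - Rw k u)) = real (card X) - real (card (X \<inter> Rw k u))"
    using c1 c2 by simp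
  have "real (card X) \<le> real (card (X \<inter> Rw k u) * 2^(k*l))"
    using kk by (simp only: of_nat_le_iff)
  hence "real (card X) \<le> real (card (X \<inter> Rw k u)) * 2^(k*l)" by simp
  hence r2: "real (card X) * (1/2)^(k*l) \<le> real (card (X \<inter> Rw k u))"
    by (simp add: power_one_over field_simps)
  have x0: "0 \<le> 1 - (1/2::real)^(k*l)" by (simp add: power_le_one)
  have "real (card (X - Rw k u)) \<le> real (card X) * (1 - (1/2)^(k*l))"
    using r1 r2 by (simp add: algebra_simps)
  also have "\<dots> \<le> real (card (Sat k l m i)) * (1 - (1/2)^(k*l))^card A * (1 - (1/2)^(k*l))"
    using IH x0 by (rule mult_right_mono)
  also have "\<dots> = real (card (Sat k l m i)) * (1 - (1/2)^(k*l))^card (insert u A)"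
    using insert.hyps by simp
  finally show ?case using eq by simp
qed

lemma tv_lower:
  assumes "finite S" "S \<noteq> {}" "finite T" "T \<noteq> {}" "T \<inter> E = {}"
  shows "d_TV (pmf_of_set S) (pmf_of_set T) \<ge> real (card (S \<inter> E)) / real (card S)"
proof -
  define U where "U = S \<union> T"
  define d where "d = (\<lambda>x. pmf (pmf_of_set S) x - pmf (pmf_of_set T) x)"
  have finU: "finite U" using assms U_def by auto
  have sumS: "sum (pmf (pmf_of_set S)) B = real (card (S \<inter> B)) / real (card S)" if "finite B" for B
    using measure_pmf_of_set[OF assms(2,1), of B] measure_measure_pmf_finite[OF that] by simp
  have sumT: "sum (pmf (pmf_of_set T)) B = real (card (T \<inter> B)) / real (card T)" if "finite B" for B
    using measure_pmf_of_set[OF assms(4,3), of B] measure_measure_pmf_finite[OF that] by simp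
  define r where "r = real (card (S \<inter> E)) / real (card S)"
  have SUE: "S \<inter> (U \<inter> E) = S \<inter> E" unfolding U_def by auto
  have TUE: "T \<inter> U \<inter> E = {}" using assms(5) by auto
  have dUE: "sum d (U \<inter> E) = r"
    using TUE unfolding d_def sum_subtractf using sumS[of "U \<inter> E"] sumT[of "U \<inter> E"] finU assms(5) SUE r_def
    by (simp add: Int_assoc[symmetric] Int_absorb1)
  have "sum d U = 1 - 1"
    unfolding d_def sum_subtractf using sumS[OF finU] sumT[OF finU] assms unfolding U_def
    by (simp add: Int_absorb2)
  moreover have "sum d U = sum d (U \<inter> E) + sum d (U - E)"
    using finU by (simp add: sum.Int_Diff)
  ultimately have dUmE: "sum d (U - E) = - r" using dUE by simp
  have "sum (\<lambda>x. \<bar>d x\<bar>) U = sum (\<lambda>x. \<bar>d x\<bar>) (U \<inter> E) + sum (\<lambda>x. \<bar>d x\<bar>) (U - E)"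
    using finU by (simp add: sum.Int_Diff)
  moreover have "sum d (U \<inter> E) \<le> sum (\<lambda>x. \<bar>d x\<bar>) (U \<inter> E)"
    by (rule sum_mono) simp
  moreover have "- sum d (U - E) \<le> sum (\<lambda>x. \<bar>d x\<bar>) (U - E)"
    unfolding sum_negf[symmetric] by (rule sum_mono) simp
  ultimately have "2 * r \<le> sum (\<lambda>x. \<bar>d x\<bar>) U" using dUE dUmE by linarith
  moreover have "d_TV (pmf_of_set S) (pmf_of_set T) = sum (\<lambda>x. \<bar>d x\<bar>) U / 2"
    unfolding d_TV_def d_def U_def using assms by simp
  ultimately show ?thesis unfolding r_def by simp
qed

lemma arith_bound:
  fixes x :: real and a :: nat
  assumes "0 \<le> x" "x \<le> 1" "a * x \<le> 1"
  shows "a * x / 2 \<le> 1 - (1 - x)^a"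
proof -
  define P where "P = (1 - x)^a"
  have P0: "0 \<le> P" unfolding P_def using assms by simp
  have "1 + a * x \<le> (1 + x)^a" using Bernoulli_inequality[of x a] assms by simp
  hence "P * (1 + a*x) \<le> P * (1+x)^a" using P0 by (rule mult_left_mono)
  also have "\<dots> = (1 - x^2)^a" unfolding P_def by (simp add: power_mult_distrib[symmetric] power2_eq_square algebra_simps)
  also have "\<dots> \<le> 1" using assms by (simp add: power_le_one power_le_one_iff)
  finally have h: "P * (1 + a*x) \<le> 1" .
  show ?thesis
  proof (rule ccontr)
    assume "\<not> ?thesis"
    hence "1 - a*x/2 < P" unfolding P_def by simp
    moreover have "0 < 1 + a*x"
    proof -
      have "0 \<le> real a * x" using assms by simp
      thus ?thesis by linarith
    qed
    ultimately have "(1 - a*x/2) * (1 + a*x) < P * (1 + a*x)"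
      by (rule mult_strict_right_mono)
    moreover have "(1 - a*x/2) * (1 + a*x) = 1 + (a*x) * (1 - a*x) / 2" by (simp add: field_simps)
    moreover have "0 \<le> (a*x) * (1 - a*x)" using assms by simp
    ultimately show False using h by linarith
  qed
qed

lemma one_side:
  assumes "k \<ge> 2" "l \<ge> 1" "real m * (1/2) ^ (k * l) < 1/2"
  shows "d_TV (mu k l m i) (mu k l m j)
           \<ge> real (card {u\<in>{1..m}. bbit m i u \<noteq> 1 \<and> bbit m j u = 1}) * (1/2)^(k*l) / 2"
proof -
  define A where "A = {u\<in>{1..m}. bbit m i u \<noteq> 1 \<and> bbit m j u = 1}"
  define E where "E = (\<Union>u\<in>A. Rw k u)"
  define x :: real where "x = (1/2)^(k*l)"
  define S where "S = Sat k l m i"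
  define T where "T = Sat k l m j"
  have finA: "finite A" unfolding A_def by auto
  have cardA: "card A \<le> m"
  proof -
    have "card A \<le> card {1..m}" unfolding A_def by (rule card_mono) auto
    thus ?thesis by simp
  qed
  have TE: "T \<inter> E = {}"
  proof -
    have "\<sigma> \<notin> Rw k u" if "\<sigma> \<in> T" "u \<in> A" for \<sigma> u
    proof -
      have "restr_clause k u \<in> hard_clauses k l m j"
        using that(2) unfolding A_def hard_clauses_def by auto
      hence "clause_sat \<sigma> (restr_clause k u)"
        using that(1) unfolding T_def Sat_def satisfying_def by auto
      thus ?thesis unfolding clause_sat_def restr_clause_def Rw_def by auto
    qed
    thus ?thesis unfolding E_def by auto
  qed
  have tv: "d_TV (mu k l m i) (mu k l m j) \<ge> real (card (S \<inter> E)) / real (card S)"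
    unfolding mu_def Sat_def[symmetric] S_def
    using tv_lower[OF finite_Sat Sat_nonempty[OF assms(1)] finite_Sat Sat_nonempty[OF assms(1)]]
      TE unfolding T_def by blast
  have ub: "real (card (S - E)) \<le> real (card S) * (1 - x)^card A"
    unfolding S_def E_def x_def
    by (rule union_bound[OF assms(2) finA]) (auto simp: A_def)
  have finS: "finite S" unfolding S_def by (rule finite_Sat)
  have Spos: "0 < real (card S)" using finS Sat_nonempty[OF assms(1)] unfolding S_def
    by (simp add: card_gt_0_iff)
  have "card S = card (S \<inter> E) + card (S - E)"
    using finS by (metis Diff_Diff_Int card_Diff_subset_Int Int_lower1 card_mono finite_Int le_add_diff_inverse Int_commute)
  hence "real (card (S \<inter> E)) = real (card S) - real (card (S - E))" by simp
  hence "real (card (S \<inter> E)) / real (card S) \<ge> 1 - (1 - x)^card A"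
    using ub Spos by (simp add: field_simps)
  moreover have x01: "0 \<le> x" "x \<le> 1" unfolding x_def by (auto simp: power_le_one)
  moreover have "card A * x \<le> 1"
  proof -
    have "card A * x \<le> m * x" using cardA x01 by (simp add: mult_right_mono)
    also have "\<dots> \<le> 1" using assms(3) unfolding x_def by simp
    finally show ?thesis .
  qed
  ultimately have "card A * x / 2 \<le> real (card (S \<inter> E)) / real (card S)"
    using arith_bound[of x "card A"] by linarith
  thus ?thesis using tv unfolding A_def x_def by linarith
qed

lemma d_TV_sym: "d_TV p q = d_TV q p"
  unfolding d_TV_def by (simp add: Un_commute abs_minus_commute)

theorem lemma5p7:
  fixes k l m i j :: nat
  assumes "k \<ge> 2" and "l \<ge> 1" and "m \<ge> 1"
    and "real m * (1/2) ^ (k * l) < 1/2"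
    and "i < 2 ^ m" and "j < 2 ^ m"
  shows "d_TV (mu k l m i) (mu k l m j) \<ge> real (d_b m i j) * (1/2) ^ (k * l + 2)"
proof -
  define A1 where "A1 = {u\<in>{1..m}. bbit m i u \<noteq> 1 \<and> bbit m j u = 1}"
  define A2 where "A2 = {u\<in>{1..m}. bbit m j u \<noteq> 1 \<and> bbit m i u = 1}"
  have bits: "bbit m a u = 0 \<or> bbit m a u = 1" for a u unfolding bbit_def by auto
  have D: "{p \<in> {1..m}. bbit m i p \<noteq> bbit m j p} = A1 \<union> A2"
    unfolding A1_def A2_def
  proof (rule set_eqI)
    fix p show "p \<in> {p \<in> {1..m}. bbit m i p \<noteq> bbit m j p} \<longleftrightarrow> p \<in> {u\<in>{1..m}. bbit m i u \<noteq> 1 \<and> bbit m j u = 1} \<union> {u\<in>{1..m}. bbit m j u \<noteq> 1 \<and> bbit m i u = 1}"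
      using bits[of i p] bits[of j p] by auto
  qed
  have "A1 \<inter> A2 = {}" unfolding A1_def A2_def by auto
  hence db: "d_b m i j = card A1 + card A2"
    unfolding d_b_def D by (simp add: card_Un_disjoint A1_def A2_def)
  have h1: "d_TV (mu k l m i) (mu k l m j) \<ge> real (card A1) * (1/2)^(k*l) / 2"
    unfolding A1_def by (rule one_side[OF assms(1,2,4)])
  have h2: "d_TV (mu k l m i) (mu k l m j) \<ge> real (card A2) * (1/2)^(k*l) / 2"
    unfolding A2_def d_TV_sym[of "mu k l m i"] by (rule one_side[OF assms(1,2,4)])
  have "real (d_b m i j) * (1/2) ^ (k * l + 2) = (real (card A1) * (1/2)^(k*l) / 2 + real (card A2) * (1/2)^(k*l) / 2) / 2"
    unfolding db by (simp add: field_simps)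
  also have "\<dots> \<le> d_TV (mu k l m i) (mu k l m j)"
  proof -
    have avg: "(P + Q) / 2 \<le> D" if "P \<le> D" "Q \<le> D" for P Q D :: real using that by (simp add: divide_le_eq)
    show ?thesis by (rule avg[OF h1 h2])
  qed
  finally show ?thesis .
qed

end
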